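(* Let $\alpha\geq 0$ and $r_\alpha(x)=\|x\|_1-\alpha\|x\|_2$ on $\mathbb{R}^N$. Let $l:\mathbb{R}^N\to\mathbb{R}$ be differentiable with $\|\nabla l(x)-\nabla l(y)\|_2\leq L\|x-y\|_2$ for all $x,y$, for some $L>0$. Define $E(x)=r_\alpha(x)+l(x)$ and assume that $E$ is coercive, i.e., $E(x)\to+\infty$ as $\|x\|_2\to+\infty$. Let $0<\lambda<1/L$, let $x^0\in\mathbb{R}^N$, and let $(x^k)$ be generated by the forward-backward splitting iteration $$x^{k+1}\in\operatorname{argmin}_{x}\ \Big(r_\alpha(x)+\frac{1}{2\lambda}\big\|x-(x^k-\lambda\nabla l(x^k))\big\|_2^2\Big).$$ Then the sequence of objective values $E(x^k)$ is decreasing, there exists a subsequence of $(x^k)$ that converges to a stationary point of $E$, and every limit point of $(x^k)$ is a stationary point of $E$.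
   Context: A stationary point of $E$ is a point $x$ satisfying the first-order optimality condition $0\in\partial r_\alpha(x)+\nabla l(x)$, where $\partial$ denotes the (limiting) subdifferential. *)

theory Defs
  imports "HOL-Analysis.Analysis"
begin

text \<open>l1 norm on R^N, modelled as real ^ 'n.  The Euclidean norm is the library norm.\<close>
definition l1norm :: "real ^ 'n \<Rightarrow> real" where
  "l1norm x = (\<Sum>i\<in>UNIV. \<bar>x $ i\<bar>)"

definition r_alpha :: "real \<Rightarrow> real ^ 'n \<Rightarrow> real" where
  "r_alpha \<alpha> x = l1norm x - \<alpha> * norm x"

definition frechet_subdiff :: "(real ^ 'n \<Rightarrow> real) \<Rightarrow> real ^ 'n \<Rightarrow> (real ^ 'n) set" where
  "frechet_subdiff f x = {v. \<forall>\<epsilon>>0. \<exists>\<delta>>0. \<forall>y. norm (y - x) < \<delta> \<longrightarrow>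
      f y \<ge> f x + inner v (y - x) - \<epsilon> * norm (y - x)}"

definition limiting_subdiff :: "(real ^ 'n \<Rightarrow> real) \<Rightarrow> real ^ 'n \<Rightarrow> (real ^ 'n) set" where
  "limiting_subdiff f x = {v. \<exists>xs vs. (xs \<longlonglongrightarrow> x) \<and> ((\<lambda>k. f (xs k)) \<longlonglongrightarrow> f x)
      \<and> (vs \<longlonglongrightarrow> v) \<and> (\<forall>k. vs k \<in> frechet_subdiff f (xs k))}"

text \<open>Stationary point of E = r_alpha + l, with gradient g of l: 0 \<in> \<partial>r_alpha(x) + g x.\<close>
definition stationary_point :: "real \<Rightarrow> (real ^ 'n \<Rightarrow> real ^ 'n) \<Rightarrow> real ^ 'n \<Rightarrow> bool" where
  "stationary_point \<alpha> g x \<longleftrightarrow> - g x \<in> limiting_subdiff (r_alpha \<alpha>) x"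

end

theory Submission
  imports Defs
begin

lemma descent:
  fixes l :: "real ^ 'n \<Rightarrow> real" and g :: "real ^ 'n \<Rightarrow> real ^ 'n"
  assumes grad: "\<And>y. (l has_derivative (\<lambda>h. inner (g y) h)) (at y)"
    and lip: "\<And>y z. norm (g y - g z) \<le> L * norm (y - z)"
  shows "l (a + h) \<le> l a + inner (g a) h + L/2 * (norm h)^2"
proof -
  define \<phi> where "\<phi> t = l (a + t *\<^sub>R h) - t * inner (g a) h - L/2 * t^2 * (norm h)^2" for t
  define \<phi>' where "\<phi>' t = inner (g (a + t *\<^sub>R h)) h - inner (g a) h - L * t * (norm h)^2" for t
  have D: "(\<phi> has_real_derivative \<phi>' t) (at t)" for t
  proof -
    have "((\<lambda>t. l (a + t *\<^sub>R h)) has_derivative (\<lambda>s. inner (g (a + t *\<^sub>R h)) (s *\<^sub>R h))) (at t)"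
      by (rule has_derivative_compose[OF _ grad]) (auto intro!: derivative_eq_intros)
    moreover have "(\<lambda>s. inner (g (a + t *\<^sub>R h)) (s *\<^sub>R h)) = (*) (inner (g (a + t *\<^sub>R h)) h)"
      by (auto simp: mult.commute)
    ultimately have "((\<lambda>t. l (a + t *\<^sub>R h)) has_real_derivative inner (g (a + t *\<^sub>R h)) h) (at t)"
      by (simp add: has_field_derivative_def)
    then show ?thesis unfolding \<phi>_def[abs_def] \<phi>'_def
      by (auto intro!: derivative_eq_intros)
  qed
  obtain z where z: "0 < z" "z < 1" "\<phi> 1 - \<phi> 0 = (1 - 0) * \<phi>' z"
    using MVT2[of 0 1 \<phi> \<phi>'] D by auto
  have "inner (g (a + z *\<^sub>R h) - g a) h \<le> norm (g (a + z *\<^sub>R h) - g a) * norm h"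
    by (rule norm_cauchy_schwarz)
  also have "\<dots> \<le> L * norm (z *\<^sub>R h) * norm h"
    using lip[of "a + z *\<^sub>R h" a] by (simp add: mult_right_mono)
  also have "\<dots> = L * z * (norm h)^2" using z by (simp add: power2_eq_square)
  finally have "\<phi>' z \<le> 0" unfolding \<phi>'_def by (simp add: inner_diff_left)
  with z have "\<phi> 1 \<le> \<phi> 0" by simp
  then show ?thesis unfolding \<phi>_def by simp
qed

lemma cont_r: "continuous_on UNIV (r_alpha \<alpha> :: real^'n \<Rightarrow> real)"
  unfolding r_alpha_def[abs_def] l1norm_def
  by (intro continuous_intros)

lemma cont_l:
  fixes l :: "real ^ 'n \<Rightarrow> real" and g :: "real ^ 'n \<Rightarrow> real ^ 'n"
  assumes grad: "\<And>y. (l has_derivative (\<lambda>h. inner (g y) h)) (at y)"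
  shows "continuous_on UNIV l"
  using grad has_derivative_continuous continuous_at_imp_continuous_on by blast

lemma sq_expand: "(norm (u + w :: real^'n))\<^sup>2 = (norm u)\<^sup>2 + 2 * inner u w + (norm w)\<^sup>2"
  by (simp add: power2_norm_eq_inner inner_simps inner_commute)

lemma frechet_min:
  fixes r :: "real ^ 'n \<Rightarrow> real"
  assumes lam: "lam > 0"
    and min: "\<forall>y. r x' + 1 / (2 * lam) * (norm (x' - d))\<^sup>2 \<le> r y + 1 / (2 * lam) * (norm (y - d))\<^sup>2"
  shows "- (1 / lam) *\<^sub>R (x' - d) \<in> frechet_subdiff r x'"
  unfolding frechet_subdiff_def
proof (intro CollectI allI impI)
  fix \<epsilon> :: real assume e: "\<epsilon> > 0"
  show "\<exists>\<delta>>0. \<forall>y. norm (y - x') < \<delta> \<longrightarrow>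
      r y \<ge> r x' + inner (- (1 / lam) *\<^sub>R (x' - d)) (y - x') - \<epsilon> * norm (y - x')"
  proof (intro exI[of _ "2 * lam * \<epsilon>"] conjI allI impI)
    show "2 * lam * \<epsilon> > 0" using lam e by simp
    fix y assume y: "norm (y - x') < 2 * lam * \<epsilon>"
    define u where "u = y - x'"
    define w where "w = x' - d"
    have yd: "y - d = u + w" unfolding u_def w_def by simp
    have m: "r x' + 1 / (2 * lam) * (norm w)\<^sup>2 \<le> r y + 1 / (2 * lam) * ((norm u)\<^sup>2 + 2 * inner u w + (norm w)\<^sup>2)"
      using min[rule_format, of y] unfolding yd sq_expand w_def by simp
    have e1: "1 / (2 * lam) * ((norm u)\<^sup>2 + 2 * inner u w + (norm w)\<^sup>2)
       = (norm u)\<^sup>2 / (2 * lam) + inner u w / lam + 1 / (2 * lam) * (norm w)\<^sup>2"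
      using lam by (simp add: field_simps)
    have "(norm u)\<^sup>2 = norm u * norm u" by (simp add: power2_eq_square)
    also have "\<dots> \<le> norm u * (2 * lam * \<epsilon>)" using y unfolding u_def
      by (intro mult_left_mono) auto
    finally have "(norm u)\<^sup>2 / (2 * lam) \<le> \<epsilon> * norm u" using lam
      by (simp add: divide_le_eq mult_ac)
    moreover have "inner (- (1 / lam) *\<^sub>R w) u = - (inner u w / lam)"
      by (simp add: inner_commute)
    ultimately show "r y \<ge> r x' + inner (- (1 / lam) *\<^sub>R (x' - d)) (y - x') - \<epsilon> * norm (y - x')"
      using m e1 unfolding u_def[symmetric] w_def[symmetric] by linarith
  qed
qed
theorem theorem1:
  fixes \<alpha> L lam :: real
    and l :: "real ^ 'n \<Rightarrow> real"
    and g :: "real ^ 'n \<Rightarrow> real ^ 'n"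
    and x :: "nat \<Rightarrow> real ^ 'n"
  assumes alpha: "\<alpha> \<ge> 0"
    and grad: "\<And>y. (l has_derivative (\<lambda>h. inner (g y) h)) (at y)"
    and Lpos: "L > 0"
    and lip: "\<And>y z. norm (g y - g z) \<le> L * norm (y - z)"
    and coercive: "filterlim (\<lambda>y. r_alpha \<alpha> y + l y) at_top at_infinity"
    and step: "lam > 0" "lam < 1 / L"
    and iter: "\<And>k. \<forall>y. r_alpha \<alpha> (x (Suc k))
                  + 1 / (2 * lam) * (norm (x (Suc k) - (x k - lam *\<^sub>R g (x k))))\<^sup>2
                \<le> r_alpha \<alpha> y + 1 / (2 * lam) * (norm (y - (x k - lam *\<^sub>R g (x k))))\<^sup>2"
  shows "(\<forall>k. r_alpha \<alpha> (x (Suc k)) + l (x (Suc k)) \<le> r_alpha \<alpha> (x k) + l (x k))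
    \<and> (\<exists>s xs. strict_mono s \<and> ((x \<circ> s) \<longlonglongrightarrow> xs) \<and> stationary_point \<alpha> g xs)
    \<and> (\<forall>s xs. strict_mono s \<and> ((x \<circ> s) \<longlonglongrightarrow> xs) \<longrightarrow> stationary_point \<alpha> g xs)"
proof -
  define E where "E y = r_alpha \<alpha> y + l y" for y
  define D where "D k = x (Suc k) - x k" for k
  define c where "c = 1 / (2 * lam) - L / 2"
  have "lam * L < 1" using step Lpos by (simp add: field_simps)
  then have "1 / lam > L" using step by (simp add: field_simps)
  then have cpos: "c > 0" unfolding c_def by (simp add: field_simps)
  have dec: "E (x (Suc k)) \<le> E (x k) - c * (norm (D k))\<^sup>2" for k
  proof -
    define G where "G = g (x k)"
    have a: "x (Suc k) - (x k - lam *\<^sub>R G) = D k + lam *\<^sub>R G" unfolding D_def by simp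
    have b: "x k - (x k - lam *\<^sub>R G) = lam *\<^sub>R G" by simp
    have it: "r_alpha \<alpha> (x (Suc k)) + 1 / (2 * lam) * (norm (D k + lam *\<^sub>R G))\<^sup>2
        \<le> r_alpha \<alpha> (x k) + 1 / (2 * lam) * (norm (lam *\<^sub>R G))\<^sup>2"
      using iter[of k, rule_format, of "x k"] unfolding G_def[symmetric] a b .
    have e1: "1 / (2 * lam) * (norm (D k + lam *\<^sub>R G))\<^sup>2
        = (norm (D k))\<^sup>2 / (2 * lam) + inner (D k) G + lam / 2 * (norm G)\<^sup>2"
      unfolding sq_expand using step
      by (simp add: field_simps power2_eq_square)
    have e2: "1 / (2 * lam) * (norm (lam *\<^sub>R G))\<^sup>2 = lam / 2 * (norm G)\<^sup>2"
      using step by (simp add: field_simps power2_eq_square)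
    have ds: "l (x k + D k) \<le> l (x k) + inner G (D k) + L/2 * (norm (D k))^2"
      unfolding G_def by (rule descent[OF grad lip])
    have "x k + D k = x (Suc k)" unfolding D_def by simp
    then have ds': "l (x (Suc k)) \<le> l (x k) + inner (D k) G + L/2 * (norm (D k))^2"
      using ds by (simp add: inner_commute)
    have it2: "r_alpha \<alpha> (x (Suc k)) + (norm (D k))\<^sup>2 / (2 * lam) + inner (D k) G \<le> r_alpha \<alpha> (x k)"
      using it e1 e2 by linarith
    have cc: "c * (norm (D k))\<^sup>2 = (norm (D k))\<^sup>2 / (2 * lam) - L/2 * (norm (D k))^2"
      unfolding c_def by (simp add: algebra_simps)
    show ?thesis unfolding E_def cc using it2 ds' by linarith
  qed
  have dec': "E (x (Suc k)) \<le> E (x k)" for k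
    using dec[of k] cpos by (smt (verit) mult_nonneg_nonneg zero_le_power2)
  have P1: "\<forall>k. r_alpha \<alpha> (x (Suc k)) + l (x (Suc k)) \<le> r_alpha \<alpha> (x k) + l (x k)"
    using dec' unfolding E_def by blast
  have le0: "E (x k) \<le> E (x 0)" for k
    by (induction k) (use dec' order_trans in auto)
  have "eventually (\<lambda>y. E (x 0) < E y) at_infinity"
    using coercive unfolding filterlim_at_top_dense E_def by blast
  then obtain b where b: "\<And>y. b \<le> norm y \<Longrightarrow> E (x 0) < E y"
    unfolding eventually_at_infinity by blast
  have xb: "norm (x k) < b" for k using b[of "x k"] le0[of k] by force
  have contE: "continuous_on UNIV E"
    unfolding E_def[abs_def] using cont_r cont_l[OF grad] by (intro continuous_intros) auto
  obtain z where "z \<in> cball 0 b" "\<forall>y\<in>cball 0 b. E z \<le> E y"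
    using continuous_attains_inf[of "cball 0 b" E] contE xb[of 0]
    by (metis compact_cball continuous_on_subset empty_iff mem_cball_0 less_imp_le subset_UNIV)
  then have lowb: "E z \<le> E (x k)" for k using xb[of k] by auto
  have sums: "(\<Sum>i<n. c * (norm (D i))\<^sup>2) \<le> E (x 0) - E (x n)" for n
  proof (induction n)
    case (Suc n) then show ?case using dec[of n] by simp
  qed simp
  have "summable (\<lambda>i. c * (norm (D i))\<^sup>2)"
    by (rule summableI_nonneg_bounded[where x="E (x 0) - E z"])
      (use cpos sums lowb in \<open>auto, smt (verit) sums lowb\<close>)
  then have "(\<lambda>i. c * (norm (D i))\<^sup>2) \<longlonglongrightarrow> 0" by (rule summable_LIMSEQ_zero)
  then have "(\<lambda>i. (1/c) * (c * (norm (D i))\<^sup>2)) \<longlonglongrightarrow> (1/c) * 0" by (intro tendsto_intros)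
  then have "(\<lambda>i. (norm (D i))\<^sup>2) \<longlonglongrightarrow> 0" using cpos by simp
  then have "(\<lambda>i. sqrt ((norm (D i))\<^sup>2)) \<longlonglongrightarrow> sqrt 0" by (intro tendsto_intros)
  then have "(\<lambda>i. norm (D i)) \<longlonglongrightarrow> 0" by simp
  then have D0: "D \<longlonglongrightarrow> 0" by (simp add: tendsto_norm_zero_iff)
  have gcont: "(\<lambda>j. g (X j)) \<longlonglongrightarrow> g a" if X: "X \<longlonglongrightarrow> a" for X a
  proof -
    have "(\<lambda>j. X j - a) \<longlonglongrightarrow> 0" using X by (simp add: LIM_zero)
    then have "(\<lambda>j. norm (X j - a)) \<longlonglongrightarrow> 0" by (simp add: tendsto_norm_zero_iff)
    then have "(\<lambda>j. L * norm (X j - a)) \<longlonglongrightarrow> L * 0" by (intro tendsto_intros)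
    then have L0: "(\<lambda>j. L * norm (X j - a)) \<longlonglongrightarrow> 0" by simp
    have "(\<lambda>j. g (X j) - g a) \<longlonglongrightarrow> 0"
      by (rule Lim_null_comparison[OF _ L0]) (simp add: lip)
    then show ?thesis by (simp add: LIM_zero_cancel)
  qed
  have P3: "\<forall>s xs. strict_mono s \<and> ((x \<circ> s) \<longlonglongrightarrow> xs) \<longrightarrow> stationary_point \<alpha> g xs"
  proof (intro allI impI, elim conjE)
    fix s xs assume s: "strict_mono s" and xs: "(x \<circ> s) \<longlonglongrightarrow> xs"
    have xs': "(\<lambda>j. x (s j)) \<longlonglongrightarrow> xs" using xs by (simp add: comp_def)
    have Ds: "(\<lambda>j. D (s j)) \<longlonglongrightarrow> 0" using LIMSEQ_subseq_LIMSEQ[OF D0 s] by (simp add: comp_def)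
    define ys where "ys j = x (Suc (s j))" for j
    define vs where "vs j = - (1 / lam) *\<^sub>R (x (Suc (s j)) - (x (s j) - lam *\<^sub>R g (x (s j))))" for j
    have ysD: "ys j = x (s j) + D (s j)" for j unfolding ys_def D_def by simp
    have "(\<lambda>j. x (s j) + D (s j)) \<longlonglongrightarrow> xs + 0" using xs' Ds by (intro tendsto_intros)
    then have ys: "ys \<longlonglongrightarrow> xs" unfolding ysD by simp
    have "isCont (r_alpha \<alpha>) xs" using cont_r continuous_on_eq_continuous_at open_UNIV by blast
    then have rys: "(\<lambda>j. r_alpha \<alpha> (ys j)) \<longlonglongrightarrow> r_alpha \<alpha> xs"
      using ys by (rule isCont_tendsto_compose)
    have vsD: "vs j = - (1 / lam) *\<^sub>R D (s j) - g (x (s j))" for j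
      unfolding vs_def D_def using step by (simp add: algebra_simps)
    have "(\<lambda>j. - (1 / lam) *\<^sub>R D (s j) - g (x (s j))) \<longlonglongrightarrow> - (1 / lam) *\<^sub>R 0 - g xs"
      using Ds gcont[OF xs'] by (intro tendsto_intros)
    then have vs: "vs \<longlonglongrightarrow> - g xs" unfolding vsD by simp
    have fr: "vs j \<in> frechet_subdiff (r_alpha \<alpha>) (ys j)" for j
      unfolding vs_def ys_def by (rule frechet_min[OF step(1) iter])
    show "stationary_point \<alpha> g xs"
      unfolding stationary_point_def limiting_subdiff_def using ys rys vs fr by blast
  qed
  have "bounded (range x)" unfolding bounded_iff using xb less_imp_le by blast
  then obtain s xs where "strict_mono s" "(x \<circ> s) \<longlonglongrightarrow> xs"
    using bounded_imp_convergent_subsequence by blast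
  then have P2: "\<exists>s xs. strict_mono s \<and> ((x \<circ> s) \<longlonglongrightarrow> xs) \<and> stationary_point \<alpha> g xs"
    using P3 by blast
  show ?thesis using P1 P2 P3 by blast
qed

end
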